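(* Let $(A,B)$ be a finite-dimensional even-symmetric associative superalgebra over an algebraically closed field $\mathbb{K}$ of characteristic zero such that $A_{\bar 0}$ is a semi-simple $A_{\bar 0}$-bimodule. If $\mathrm{Ann}(A)=\{0\}$, then $A$ is an orthogonal direct sum of simple even-symmetric associative superalgebras, i.e. $A=A_1\oplus\cdots\oplus A_m$ where the $A_k$ are pairwise $B$-orthogonal graded two-sided ideals, each simple as an associative superalgebra, with $B|_{A_k\times A_k}$ non-degenerate.
   Context: A superalgebra is $\mathbb{Z}_2$-graded, $A=A_{\bar 0}\oplus A_{\bar 1}$, $A_\alpha A_\beta\subseteq A_{\alpha+\beta}$. An even-symmetric structure on $A$ is a bilinear form $B$ with $B(A_{\bar 0},A_{\bar 1})=B(A_{\bar 1},A_{\bar 0})=0$ which is supersymmetric ($B(x,y)=(-1)^{|x||y|}B(y,x)$), associative ($B(xy,z)=B(x,yz)$) and non-degenerate. A superalgebra is simple if its product is non-zero and it has no graded two-sided ideals other than $\{0\}$ and itself. $A_{\bar 0}$ is an $A_{\bar 0}$-bimodule via multiplication, semi-simple if every sub-bimodule has a complementary sub-bimodule. $\mathrm{Ann}(A)=\{x: xA=Ax=\{0\}\}$. *)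

theory Defs
  imports Main "HOL-Computational_Algebra.Polynomial"
begin

definition superalgebra ::
  "('k::field \<Rightarrow> 'v::ab_group_add \<Rightarrow> 'v) \<Rightarrow> ('v \<Rightarrow> 'v \<Rightarrow> 'v) \<Rightarrow> 'v set \<Rightarrow> 'v set \<Rightarrow> bool" where
  "superalgebra scale mul A0 A1 \<longleftrightarrow>
     vector_space scale \<and>
     (\<forall>z. Vector_Spaces.linear scale scale (\<lambda>x. mul x z) \<and> Vector_Spaces.linear scale scale (mul z)) \<and>
     module.subspace scale A0 \<and> module.subspace scale A1 \<and>
     A0 \<inter> A1 = {0} \<and> (\<forall>v. \<exists>a\<in>A0. \<exists>b\<in>A1. v = a + b) \<and>
     (\<forall>x\<in>A0. \<forall>y\<in>A0. mul x y \<in> A0) \<and> (\<forall>x\<in>A0. \<forall>y\<in>A1. mul x y \<in> A1) \<and>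
     (\<forall>x\<in>A1. \<forall>y\<in>A0. mul x y \<in> A1) \<and> (\<forall>x\<in>A1. \<forall>y\<in>A1. mul x y \<in> A0)"

definition assoc_mul :: "('v \<Rightarrow> 'v \<Rightarrow> 'v) \<Rightarrow> bool" where
  "assoc_mul mul \<longleftrightarrow> (\<forall>x y z. mul (mul x y) z = mul x (mul y z))"

definition finite_dim :: "('k::field \<Rightarrow> 'v::ab_group_add \<Rightarrow> 'v) \<Rightarrow> bool" where
  "finite_dim scale \<longleftrightarrow> (\<exists>Basis. finite_dimensional_vector_space scale Basis)"

definition even_symmetric ::
  "('k::field \<Rightarrow> 'v::ab_group_add \<Rightarrow> 'v) \<Rightarrow> ('v \<Rightarrow> 'v \<Rightarrow> 'v) \<Rightarrow> 'v set \<Rightarrow> 'v set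
    \<Rightarrow> ('v \<Rightarrow> 'v \<Rightarrow> 'k) \<Rightarrow> bool" where
  "even_symmetric scale mul A0 A1 B \<longleftrightarrow>
     (\<forall>z. Vector_Spaces.linear scale (*) (\<lambda>x. B x z) \<and> Vector_Spaces.linear scale (*) (B z)) \<and>
     (\<forall>x\<in>A0. \<forall>y\<in>A1. B x y = 0 \<and> B y x = 0) \<and>
     (\<forall>x\<in>A0. \<forall>y. B x y = B y x) \<and>
     (\<forall>x\<in>A1. \<forall>y\<in>A1. B x y = - B y x) \<and>
     (\<forall>x y z. B (mul x y) z = B x (mul y z)) \<and>
     (\<forall>x. (\<forall>y. B x y = 0) \<longrightarrow> x = 0)"

definition sub_bimodule ::
  "('k::field \<Rightarrow> 'v::ab_group_add \<Rightarrow> 'v) \<Rightarrow> ('v \<Rightarrow> 'v \<Rightarrow> 'v) \<Rightarrow> 'v set \<Rightarrow> 'v set \<Rightarrow> bool" where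
  "sub_bimodule scale mul A0 M \<longleftrightarrow> M \<subseteq> A0 \<and> module.subspace scale M \<and>
     (\<forall>a\<in>A0. \<forall>x\<in>M. mul a x \<in> M \<and> mul x a \<in> M)"

definition semisimple_even_bimodule ::
  "('k::field \<Rightarrow> 'v::ab_group_add \<Rightarrow> 'v) \<Rightarrow> ('v \<Rightarrow> 'v \<Rightarrow> 'v) \<Rightarrow> 'v set \<Rightarrow> bool" where
  "semisimple_even_bimodule scale mul A0 \<longleftrightarrow>
     (\<forall>M. sub_bimodule scale mul A0 M \<longrightarrow>
        (\<exists>N. sub_bimodule scale mul A0 N \<and> M \<inter> N = {0} \<and> (\<forall>a\<in>A0. \<exists>x\<in>M. \<exists>y\<in>N. a = x + y)))"

definition Ann :: "('v::zero \<Rightarrow> 'v \<Rightarrow> 'v) \<Rightarrow> 'v set" where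
  "Ann mul = {x. \<forall>y. mul x y = 0 \<and> mul y x = 0}"

definition graded_ideal ::
  "('k::field \<Rightarrow> 'v::ab_group_add \<Rightarrow> 'v) \<Rightarrow> ('v \<Rightarrow> 'v \<Rightarrow> 'v) \<Rightarrow> 'v set \<Rightarrow> 'v set
    \<Rightarrow> 'v set \<Rightarrow> 'v set \<Rightarrow> bool" where
  "graded_ideal scale mul A0 A1 I J \<longleftrightarrow> J \<subseteq> I \<and> module.subspace scale J \<and>
     (\<forall>x\<in>I. \<forall>j\<in>J. mul x j \<in> J \<and> mul j x \<in> J) \<and>
     (\<forall>j\<in>J. \<exists>a\<in>J \<inter> A0. \<exists>b\<in>J \<inter> A1. j = a + b)"

definition simple_sub ::
  "('k::field \<Rightarrow> 'v::ab_group_add \<Rightarrow> 'v) \<Rightarrow> ('v \<Rightarrow> 'v \<Rightarrow> 'v) \<Rightarrow> 'v set \<Rightarrow> 'v set \<Rightarrow> 'v set \<Rightarrow> bool" where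
  "simple_sub scale mul A0 A1 I \<longleftrightarrow> (\<exists>x\<in>I. \<exists>y\<in>I. mul x y \<noteq> 0) \<and>
     (\<forall>J. graded_ideal scale mul A0 A1 I J \<longrightarrow> J = {0} \<or> J = I)"

end

theory Submission
  imports Defs
begin

locale sa =
  fixes scale :: "'k::field \<Rightarrow> 'v::ab_group_add \<Rightarrow> 'v"
    and mul :: "'v \<Rightarrow> 'v \<Rightarrow> 'v"
    and A0 A1 :: "'v set"
    and B :: "'v \<Rightarrow> 'v \<Rightarrow> 'k"
    and Basis :: "'v set"
  assumes sup: "superalgebra scale mul A0 A1"
    and asc: "assoc_mul mul"
    and fd: "finite_dimensional_vector_space scale Basis"
    and es: "even_symmetric scale mul A0 A1 B"
    and ss: "semisimple_even_bimodule scale mul A0"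
    and ann: "Ann mul = {0}"
begin

sublocale finite_dimensional_vector_space scale Basis by (rule fd)

lemma linL: "Vector_Spaces.linear scale scale (\<lambda>x. mul x z)"
  using sup unfolding superalgebra_def by blast
lemma linR: "Vector_Spaces.linear scale scale (mul z)"
  using sup unfolding superalgebra_def by blast

lemma mul_addL: "mul (x + y) z = mul x z + mul y z"
  using linL[of z] unfolding Vector_Spaces.linear_iff by blast
lemma mul_addR: "mul z (x + y) = mul z x + mul z y"
  using linR[of z] unfolding Vector_Spaces.linear_iff by blast
lemma mul_0L[simp]: "mul 0 z = 0"
  using mul_addL[of 0 0 z] by simp
lemma mul_0R[simp]: "mul z 0 = 0"
  using mul_addR[of z 0 0] by simp
lemma mul_assoc: "mul (mul x y) z = mul x (mul y z)"
  using asc unfolding assoc_mul_def by blast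

lemma BlinL: "Vector_Spaces.linear scale (*) (\<lambda>x. B x z)"
  using es unfolding even_symmetric_def by blast
lemma BlinR: "Vector_Spaces.linear scale (*) (B z)"
  using es unfolding even_symmetric_def by blast
lemma B_addL: "B (x + y) z = B x z + B y z"
  using BlinL[of z] unfolding Vector_Spaces.linear_iff by blast
lemma B_addR: "B z (x + y) = B z x + B z y"
  using BlinR[of z] unfolding Vector_Spaces.linear_iff by blast
lemma B_0L[simp]: "B 0 z = 0"
  using B_addL[of 0 0 z] by (metis add.right_neutral add_left_cancel)
lemma B_0R[simp]: "B z 0 = 0"
  using B_addR[of z 0 0] by (metis add.right_neutral add_left_cancel)
lemma B_assoc: "B (mul x y) z = B x (mul y z)"
  using es unfolding even_symmetric_def by blast
lemma B_nondeg: "(\<And>y. B x y = 0) \<Longrightarrow> x = 0"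
  using es unfolding even_symmetric_def by blast
lemma B_01: "x \<in> A0 \<Longrightarrow> y \<in> A1 \<Longrightarrow> B x y = 0 \<and> B y x = 0"
  using es unfolding even_symmetric_def by blast
lemma B_sym0: "x \<in> A0 \<Longrightarrow> B x y = B y x"
  using es unfolding even_symmetric_def by blast
lemma B_anti11: "x \<in> A1 \<Longrightarrow> y \<in> A1 \<Longrightarrow> B x y = - B y x"
  using es unfolding even_symmetric_def by blast

lemma sub0: "subspace A0" and sub1: "subspace A1"
  using sup unfolding superalgebra_def by blast+
lemma A01: "A0 \<inter> A1 = {0}"
  using sup unfolding superalgebra_def by blast
lemma decomp: "\<exists>a\<in>A0. \<exists>b\<in>A1. v = a + b"
  using sup unfolding superalgebra_def by blast
lemma m00: "x \<in> A0 \<Longrightarrow> y \<in> A0 \<Longrightarrow> mul x y \<in> A0"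
  and m01: "x \<in> A0 \<Longrightarrow> y \<in> A1 \<Longrightarrow> mul x y \<in> A1"
  and m10: "x \<in> A1 \<Longrightarrow> y \<in> A0 \<Longrightarrow> mul x y \<in> A1"
  and m11: "x \<in> A1 \<Longrightarrow> y \<in> A1 \<Longrightarrow> mul x y \<in> A0"
  using sup unfolding superalgebra_def by blast+

lemma B_anti1: assumes "x \<in> A1" shows "B x y = - B y x"
proof -
  obtain a b where ab: "a \<in> A0" "b \<in> A1" "y = a + b" using decomp by blast
  show ?thesis using ab assms B_01[of a x] B_anti11[of x b]
    by (simp add: B_addL B_addR)
qed

lemma decomp_unique:
  assumes "a \<in> A0" "b \<in> A1" "a' \<in> A0" "b' \<in> A1" "a + b = a' + b'"
  shows "a = a' \<and> b = b'"
proof -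
  have "a - a' = b' - b" using assms(5) by (simp add: algebra_simps)
  moreover have "a - a' \<in> A0" using assms sub0 subspace_diff by blast
  moreover have "b' - b \<in> A1" using assms sub1 subspace_diff by blast
  ultimately have "b' - b \<in> A0 \<inter> A1" by simp
  hence "b' - b = 0" using A01 by blast
  thus ?thesis using \<open>a - a' = b' - b\<close> by simp
qed

lemma D: assumes "\<And>x y. B v (mul x y) = 0" shows "v = 0"
proof -
  have 1: "mul v x = 0" for x
    by (rule B_nondeg) (simp add: B_assoc assms)
  have 2: "mul x v = 0" for x
    by (rule B_nondeg) (simp add: B_assoc 1)
  have "v \<in> Ann mul" unfolding Ann_def using 1 2 by blast
  thus ?thesis using ann by blast
qed

lemma gi_sub: "graded_ideal scale mul A0 A1 UNIV K \<Longrightarrow> subspace K"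
  unfolding graded_ideal_def by blast
lemma gi_mulL: "graded_ideal scale mul A0 A1 UNIV K \<Longrightarrow> j \<in> K \<Longrightarrow> mul x j \<in> K"
  unfolding graded_ideal_def by blast
lemma gi_mulR: "graded_ideal scale mul A0 A1 UNIV K \<Longrightarrow> j \<in> K \<Longrightarrow> mul j x \<in> K"
  unfolding graded_ideal_def by blast
lemma gi_dec: "graded_ideal scale mul A0 A1 UNIV K \<Longrightarrow> j \<in> K \<Longrightarrow> \<exists>a\<in>K \<inter> A0. \<exists>b\<in>K \<inter> A1. j = a + b"
  unfolding graded_ideal_def by blast

lemma sqzero:
  assumes gi: "graded_ideal scale mul A0 A1 UNIV K" and sq: "\<forall>x\<in>K. \<forall>y\<in>K. mul x y = 0"
  shows "K = {0}"
proof -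
  have subK: "subspace K" using gi gi_sub by blast
  have sb: "sub_bimodule scale mul A0 (K \<inter> A0)"
    unfolding sub_bimodule_def
  proof (intro conjI ballI)
    show "subspace (K \<inter> A0)" using subK sub0 subspace_inter by blast
    fix a x assume "a \<in> A0" "x \<in> K \<inter> A0"
    thus "mul a x \<in> K \<inter> A0" "mul x a \<in> K \<inter> A0"
      using gi_mulL[OF gi, of x a] gi_mulR[OF gi, of x a] m00[of a x] m00[of x a] by auto
  qed auto
  obtain N where N: "sub_bimodule scale mul A0 N" "(K \<inter> A0) \<inter> N = {0}"
     "\<forall>a\<in>A0. \<exists>x\<in>K \<inter> A0. \<exists>y\<in>N. a = x + y"
    using ss[unfolded semisimple_even_bimodule_def, rule_format, OF sb] by blast
  have NA: "N \<subseteq> A0" using N(1) unfolding sub_bimodule_def by blast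
  have b: "mul x a = 0 \<and> mul a x = 0" if x: "x \<in> K \<inter> A0" and a: "a \<in> A0" for x a
  proof -
    obtain i n where "i \<in> K \<inter> A0" "n \<in> N" "a = i + n" using N(3) a by blast
    have xi: "mul x i = 0" "mul i x = 0" using sq x \<open>i \<in> K \<inter> A0\<close> by auto
    have "mul x n \<in> N" "mul n x \<in> N" using N(1) x \<open>n \<in> N\<close> unfolding sub_bimodule_def by blast+
    moreover have "mul x n \<in> K \<inter> A0" "mul n x \<in> K \<inter> A0"
      using gi_mulL[OF gi] gi_mulR[OF gi] m00 x NA \<open>n \<in> N\<close> by blast+
    ultimately have "mul x n = 0" "mul n x = 0" using N(2) by blast+
    thus ?thesis using xi \<open>a = i + n\<close> by (simp add: mul_addL mul_addR)
  qed
  have d: "mul q (mul x p) = 0" if x: "x \<in> K \<inter> A0" and p: "p \<in> A1" and q: "q \<in> A1" for x p q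
  proof (rule D)
    fix c d
    let ?y = "mul q (mul x p)"
    have y: "?y \<in> K \<inter> A0" using gi_mulL[OF gi] gi_mulR[OF gi] m01 m11 x p q by blast
    have "mul ?y c = 0 \<and> mul c ?y = 0" for c
    proof -
      obtain c0 c1 where c: "c0 \<in> A0" "c1 \<in> A1" "c = c0 + c1" using decomp by blast
      have "mul ?y c1 = mul q (mul x (mul p c1))" by (simp add: mul_assoc)
      also have "\<dots> = 0" using b[OF x m11[OF p c(2)]] by simp
      finally have 1: "mul ?y c1 = 0" .
      have "mul c1 ?y = mul (mul (mul c1 q) x) p" by (simp add: mul_assoc)
      also have "\<dots> = 0" using b[OF x m11[OF c(2) q]] by simp
      finally have 2: "mul c1 ?y = 0" .
      show ?thesis using 1 2 b[OF y c(1)] c(3) by (simp add: mul_addL mul_addR)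
    qed
    hence "?y \<in> Ann mul" unfolding Ann_def by blast
    hence "?y = 0" using ann by blast
    thus "B ?y (mul c d) = 0" by simp
  qed
  have e: "mul x p = 0" if x: "x \<in> K \<inter> A0" and p: "p \<in> A1" for x p
  proof (rule D)
    fix c d
    let ?z = "mul x p"
    have z: "?z \<in> A1" using m01 x p by blast
    obtain c0 c1 where c: "c0 \<in> A0" "c1 \<in> A1" "c = c0 + c1" using decomp by blast
    obtain d0 d1 where dd: "d0 \<in> A0" "d1 \<in> A1" "d = d0 + d1" using decomp by blast
    have 1: "B ?z (mul c0 d0) = 0" using B_01[OF m00[OF c(1) dd(1)] z] by simp
    have 2: "B ?z (mul c1 d1) = 0" using B_01[OF m11[OF c(2) dd(2)] z] by simp
    have "B ?z (mul c1 d0) = B (mul x (mul p c1)) d0" by (simp add: B_assoc mul_assoc)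
    also have "\<dots> = 0" using b[OF x m11[OF p c(2)]] by simp
    finally have 3: "B ?z (mul c1 d0) = 0" .
    have "B ?z (mul c0 d1) = - B (mul c0 d1) ?z" using B_anti1[OF z] by blast
    also have "\<dots> = - B c0 (mul d1 ?z)" by (simp add: B_assoc)
    also have "\<dots> = 0" using d[OF x p dd(2)] by simp
    finally have 4: "B ?z (mul c0 d1) = 0" .
    show "B ?z (mul c d) = 0" using 1 2 3 4 c(3) dd(3) by (simp add: mul_addL mul_addR B_addR)
  qed
  have f: "x = 0" if x: "x \<in> K \<inter> A0" for x
  proof (rule D)
    fix c d
    obtain c0 c1 where c: "c0 \<in> A0" "c1 \<in> A1" "c = c0 + c1" using decomp by blast
    obtain d0 d1 where dd: "d0 \<in> A0" "d1 \<in> A1" "d = d0 + d1" using decomp by blast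
    have xA: "x \<in> A0" using x by blast
    have 1: "B x (mul c0 d1) = 0" using B_01[OF xA m01[OF c(1) dd(2)]] by simp
    have 2: "B x (mul c1 d0) = 0" using B_01[OF xA m10[OF c(2) dd(1)]] by simp
    have 3: "B x (mul c0 d0) = 0" using b[OF x c(1)] by (simp flip: B_assoc)
    have 4: "B x (mul c1 d1) = 0" using e[OF x c(2)] by (simp flip: B_assoc)
    show "B x (mul c d) = 0" using 1 2 3 4 c(3) dd(3) by (simp add: mul_addL mul_addR B_addR)
  qed
  have g: "z = 0" if z: "z \<in> K \<inter> A1" for z
  proof (rule D)
    fix c d
    obtain c0 c1 where c: "c0 \<in> A0" "c1 \<in> A1" "c = c0 + c1" using decomp by blast
    obtain d0 d1 where dd: "d0 \<in> A0" "d1 \<in> A1" "d = d0 + d1" using decomp by blast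
    have zA: "z \<in> A1" using z by blast
    have 1: "B z (mul c0 d0) = 0" using B_01[OF m00[OF c(1) dd(1)] zA] by simp
    have 2: "B z (mul c1 d1) = 0" using B_01[OF m11[OF c(2) dd(2)] zA] by simp
    have "mul z c1 \<in> K \<inter> A0" using gi_mulR[OF gi] m11 z c(2) by blast
    hence "mul z c1 = 0" using f by blast
    hence 3: "B z (mul c1 d0) = 0" by (simp flip: B_assoc)
    have "mul d1 z \<in> K \<inter> A0" using gi_mulL[OF gi] m11 z dd(2) by blast
    hence "mul d1 z = 0" using f by blast
    hence 4: "B z (mul c0 d1) = 0" using B_anti1[OF zA, of "mul c0 d1"] by (simp add: B_assoc)
    show "B z (mul c d) = 0" using 1 2 3 4 c(3) dd(3) by (simp add: mul_addL mul_addR B_addR)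
  qed
  show ?thesis
  proof
    show "K \<subseteq> {0}"
    proof
      fix j assume "j \<in> K"
      then obtain a b where "a \<in> K \<inter> A0" "b \<in> K \<inter> A1" "j = a + b" using gi_dec[OF gi] by blast
      thus "j \<in> {0}" using f g by (metis add.right_neutral singletonI)
    qed
    show "{0} \<subseteq> K" using subK subspace_0 by blast
  qed
qed

lemma B_scaleL: "B (scale c x) z = c * B x z"
  using BlinL[of z] unfolding Vector_Spaces.linear_iff by blast
lemma B_scaleR: "B z (scale c x) = c * B z x"
  using BlinR[of z] unfolding Vector_Spaces.linear_iff by blast

lemma subspace_kerL: "subspace {x. B x v = 0}"
  by (rule subspaceI) (auto simp: B_addL B_scaleL)
lemma subspace_kerR: "subspace {x. B v x = 0}"
  by (rule subspaceI) (auto simp: B_addR B_scaleR)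

definition perp :: "'v set \<Rightarrow> 'v set" where
  "perp I = {v. \<forall>s\<in>I. B s v = 0}"

lemma perp_sym:
  assumes gi: "graded_ideal scale mul A0 A1 UNIV I"
  shows "(\<forall>s\<in>I. B s v = 0) \<longleftrightarrow> (\<forall>s\<in>I. B v s = 0)"
proof
  assume h: "\<forall>s\<in>I. B s v = 0"
  show "\<forall>s\<in>I. B v s = 0"
  proof
    fix s assume "s \<in> I"
    then obtain a b where ab: "a \<in> I \<inter> A0" "b \<in> I \<inter> A1" "s = a + b" using gi_dec[OF gi] by blast
    have "B v a = 0" using B_sym0[of a v] ab h by auto
    moreover have "B v b = 0" using B_anti1[of b v] ab h by auto
    ultimately show "B v s = 0" using ab(3) by (simp add: B_addR)
  qed
next
  assume h: "\<forall>s\<in>I. B v s = 0"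
  show "\<forall>s\<in>I. B s v = 0"
  proof
    fix s assume "s \<in> I"
    then obtain a b where ab: "a \<in> I \<inter> A0" "b \<in> I \<inter> A1" "s = a + b" using gi_dec[OF gi] by blast
    have "B a v = 0" using B_sym0[of a v] ab h by auto
    moreover have "B b v = 0" using B_anti1[of b v] ab h by auto
    ultimately show "B s v = 0" using ab(3) by (simp add: B_addL)
  qed
qed

lemma perp_sym':
  assumes gi: "graded_ideal scale mul A0 A1 UNIV I" and "v \<in> perp I" and "s \<in> I"
  shows "B v s = 0"
  using perp_sym[OF gi, of v] assms(2,3) unfolding perp_def by blast

lemma perp_gi:
  assumes gi: "graded_ideal scale mul A0 A1 UNIV I"
  shows "graded_ideal scale mul A0 A1 UNIV (perp I)"
  unfolding graded_ideal_def
proof (intro conjI ballI)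
  show "perp I \<subseteq> UNIV" by simp
  show "subspace (perp I)"
    by (rule subspaceI) (auto simp: perp_def B_addR B_scaleR)
  fix x j assume j: "j \<in> perp I"
  show "mul x j \<in> perp I"
    unfolding perp_def using j gi_mulR[OF gi] by (auto simp: perp_def B_assoc[symmetric])
  have "\<forall>s\<in>I. B (mul j x) s = 0"
    using perp_sym'[OF gi j] gi_mulL[OF gi] by (simp add: B_assoc)
  thus "mul j x \<in> perp I" using perp_sym[OF gi] unfolding perp_def by blast
next
  fix j assume j: "j \<in> perp I"
  obtain v0 v1 where v: "v0 \<in> A0" "v1 \<in> A1" "j = v0 + v1" using decomp by blast
  have "B s v0 = 0 \<and> B s v1 = 0" if s: "s \<in> I" for s
  proof -
    obtain a b where ab: "a \<in> I \<inter> A0" "b \<in> I \<inter> A1" "s = a + b" using gi_dec[OF gi s] by blast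
    have "B a j = 0" "B b j = 0" using j ab unfolding perp_def by auto
    hence "B a v0 = 0" "B b v1 = 0" using v ab B_01[of a v1] B_01[of v0 b] by (auto simp: B_addR)
    thus ?thesis using v ab B_01[of a v1] B_01[of v0 b] by (auto simp: B_addL)
  qed
  hence "v0 \<in> perp I" "v1 \<in> perp I" unfolding perp_def by auto
  thus "\<exists>a\<in>perp I \<inter> A0. \<exists>b\<in>perp I \<inter> A1. j = a + b" using v by blast
qed

lemma int_gi:
  assumes gi: "graded_ideal scale mul A0 A1 UNIV I" and gj: "graded_ideal scale mul A0 A1 UNIV J"
  shows "graded_ideal scale mul A0 A1 UNIV (I \<inter> J)"
  unfolding graded_ideal_def
proof (intro conjI ballI)
  show "I \<inter> J \<subseteq> UNIV" by simp
  show "subspace (I \<inter> J)" using gi_sub[OF gi] gi_sub[OF gj] subspace_inter by blast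
  fix x j assume "j \<in> I \<inter> J"
  thus "mul x j \<in> I \<inter> J" "mul j x \<in> I \<inter> J" using gi_mulL[OF gi] gi_mulL[OF gj] gi_mulR[OF gi] gi_mulR[OF gj] by auto
next
  fix j assume j: "j \<in> I \<inter> J"
  obtain a b where ab: "a \<in> I \<inter> A0" "b \<in> I \<inter> A1" "j = a + b" using gi_dec[OF gi] j by blast
  obtain a' b' where ab': "a' \<in> J \<inter> A0" "b' \<in> J \<inter> A1" "j = a' + b'" using gi_dec[OF gj] j by blast
  have "a = a' \<and> b = b'" using decomp_unique[of a b a' b'] ab ab' by auto
  thus "\<exists>a\<in>I \<inter> J \<inter> A0. \<exists>b\<in>I \<inter> J \<inter> A1. j = a + b" using ab ab' by blast
qed

lemma perp_int:
  assumes gi: "graded_ideal scale mul A0 A1 UNIV I"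
  shows "I \<inter> perp I = {0}"
proof (rule sqzero)
  show "graded_ideal scale mul A0 A1 UNIV (I \<inter> perp I)" by (rule int_gi[OF gi perp_gi[OF gi]])
  show "\<forall>x\<in>I \<inter> perp I. \<forall>y\<in>I \<inter> perp I. mul x y = 0"
  proof (intro ballI)
    fix x y assume x: "x \<in> I \<inter> perp I" and y: "y \<in> I \<inter> perp I"
    show "mul x y = 0"
    proof (rule B_nondeg)
      fix z
      have "mul y z \<in> I" using gi_mulR[OF gi] y by blast
      thus "B (mul x y) z = 0" using perp_sym'[OF gi, of x] x by (simp add: B_assoc)
    qed
  qed
qed

lemma perp_mul:
  assumes gi: "graded_ideal scale mul A0 A1 UNIV I" and x: "x \<in> I" and y: "y \<in> perp I"
  shows "mul x y = 0 \<and> mul y x = 0"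
proof
  show "mul x y = 0"
  proof (rule B_nondeg)
    fix z
    have "mul y z \<in> perp I" using gi_mulR[OF perp_gi[OF gi]] y by blast
    thus "B (mul x y) z = 0" using x by (simp add: B_assoc perp_def)
  qed
  show "mul y x = 0"
  proof (rule B_nondeg)
    fix z
    have "mul x z \<in> I" using gi_mulR[OF gi] x by blast
    thus "B (mul y x) z = 0" using perp_sym'[OF gi y] by (simp add: B_assoc)
  qed
qed

lemma codim1:
  assumes W: "subspace W"
  shows "dim W \<le> dim (W \<inter> {v. B x v = 0}) + 1"
proof (cases "\<forall>w\<in>W. B x w = 0")
  case True
  hence "W \<inter> {v. B x v = 0} = W" by blast
  thus ?thesis by simp
next
  case False
  then obtain w0 where w0: "w0 \<in> W" "B x w0 \<noteq> 0" by blast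
  let ?S = "W \<inter> {v. B x v = 0}"
  have "W \<subseteq> span (insert w0 ?S)"
  proof
    fix w assume w: "w \<in> W"
    let ?c = "B x w / B x w0"
    have 1: "w - scale ?c w0 \<in> W" using W w w0 subspace_diff subspace_scale by blast
    have "B x (w - scale ?c w0) = B x w - ?c * B x w0"
      using B_addR[of x w "- scale ?c w0"] B_scaleR[of x "-?c" w0] by (simp add: scale_minus_left)
    also have "\<dots> = 0" using w0(2) by simp
    finally have "w - scale ?c w0 \<in> ?S" using 1 by blast
    hence a: "w - scale ?c w0 \<in> span (insert w0 ?S)" by (simp add: span_base)
    have b: "scale ?c w0 \<in> span (insert w0 ?S)" by (simp add: span_base span_scale)
    have "w = (w - scale ?c w0) + scale ?c w0" by simp
    thus "w \<in> span (insert w0 ?S)" using span_add[OF a b] by metis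
  qed
  hence "dim W \<le> dim (insert w0 ?S)" by (rule subset_le_dim)
  also have "\<dots> \<le> dim ?S + 1" by (simp add: dim_insert)
  finally show ?thesis .
qed

lemma codimF:
  assumes F: "finite F" and W: "subspace W"
  shows "dim W \<le> dim (W \<inter> {v. \<forall>b\<in>F. B b v = 0}) + card F"
  using F
proof (induction F rule: finite_induct)
  case empty
  then show ?case by simp
next
  case (insert x F)
  let ?W = "W \<inter> {v. \<forall>b\<in>F. B b v = 0}"
  have sW: "subspace ?W"
  proof -
    have "{v. \<forall>b\<in>F. B b v = 0} = (\<Inter>b\<in>F. {v. B b v = 0})" by blast
    hence "subspace {v. \<forall>b\<in>F. B b v = 0}" using subspace_Int[of F "\<lambda>b. {v. B b v = 0}"] subspace_kerR by auto
    thus ?thesis using W subspace_inter by blast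
  qed
  have eq: "?W \<inter> {v. B x v = 0} = W \<inter> {v. \<forall>b\<in>insert x F. B b v = 0}" by blast
  have "dim ?W \<le> dim (?W \<inter> {v. B x v = 0}) + 1" by (rule codim1[OF sW])
  thus ?case using insert eq by simp
qed

lemma perp_complement:
  assumes gi: "graded_ideal scale mul A0 A1 UNIV I"
  shows "\<exists>i\<in>I. \<exists>p\<in>perp I. v = i + p"
proof -
  have sI: "subspace I" using gi_sub[OF gi] .
  have sP: "subspace (perp I)" using gi_sub[OF perp_gi[OF gi]] .
  obtain F where F: "F \<subseteq> I" "independent F" "I \<subseteq> span F" "card F = dim I"
    using basis_exists[of I] by blast
  have fF: "finite F" using finiteI_independent[OF F(2)] .
  have eqP: "perp I = UNIV \<inter> {v. \<forall>b\<in>F. B b v = 0}"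
  proof
    show "perp I \<subseteq> UNIV \<inter> {v. \<forall>b\<in>F. B b v = 0}" using F(1) unfolding perp_def by blast
    show "UNIV \<inter> {v. \<forall>b\<in>F. B b v = 0} \<subseteq> perp I"
    proof
      fix v assume "v \<in> UNIV \<inter> {v. \<forall>b\<in>F. B b v = 0}"
      hence "F \<subseteq> {x. B x v = 0}" by blast
      hence "span F \<subseteq> {x. B x v = 0}" using span_minimal subspace_kerL by blast
      thus "v \<in> perp I" using F(3) unfolding perp_def by blast
    qed
  qed
  have d1: "dim (UNIV::'v set) \<le> dim (perp I) + dim I"
    using codimF[OF fF subspace_UNIV] eqP F(4) by simp
  have d2: "dim {x + y |x y. x \<in> I \<and> y \<in> perp I} + dim (I \<inter> perp I) = dim I + dim (perp I)"
    by (rule dim_sums_Int[OF sI sP])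
  have "dim (I \<inter> perp I) = 0" unfolding perp_int[OF gi] by simp
  hence "dim (UNIV::'v set) \<le> dim {x + y |x y. x \<in> I \<and> y \<in> perp I}" using d1 d2 by linarith
  hence "{x + y |x y. x \<in> I \<and> y \<in> perp I} = UNIV"
    using subspace_dim_equal[OF subspace_sums[OF sI sP] subspace_UNIV] by blast
  thus ?thesis by blast
qed

lemma decomp_S:
  assumes "graded_ideal scale mul A0 A1 UNIV S"
  shows "\<exists>(m::nat) (I :: nat \<Rightarrow> 'v set).
     (\<forall>k<m. graded_ideal scale mul A0 A1 UNIV (I k)) \<and>
     (\<forall>k<m. simple_sub scale mul A0 A1 (I k)) \<and>
     (\<forall>k<m. \<forall>x\<in>I k. (\<forall>y\<in>I k. B x y = 0) \<longrightarrow> x = 0) \<and>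
     (\<forall>j<m. \<forall>k<m. j \<noteq> k \<longrightarrow> (\<forall>x\<in>I j. \<forall>y\<in>I k. B x y = 0)) \<and>
     (\<forall>k<m. I k \<subseteq> S) \<and>
     (\<forall>v\<in>S. \<exists>f. (\<forall>k<m. f k \<in> I k) \<and> v = (\<Sum>k<m. f k)) \<and>
     (\<forall>f. (\<forall>k<m. f k \<in> I k) \<and> (\<Sum>k<m. f k) = 0 \<longrightarrow> (\<forall>k<m. f k = 0))"
  using assms
proof (induction "dim S" arbitrary: S rule: less_induct)
  case less
  note giS = less.prems
  have sS: "subspace S" using gi_sub[OF giS] .
  show ?case
  proof (cases "S = {0}")
    case True
    show ?thesis by (rule exI[of _ 0]) (auto simp: True)
  next
    case False
    let ?P = "\<lambda>J. graded_ideal scale mul A0 A1 UNIV J \<and> J \<subseteq> S \<and> J \<noteq> {0}"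
    have "?P S" using giS False by blast
    then obtain I where PI: "?P I" and Imin: "\<And>J. ?P J \<Longrightarrow> dim I \<le> dim J"
      using ex_has_least_nat[of ?P S dim] by blast
    have gi: "graded_ideal scale mul A0 A1 UNIV I" and IS: "I \<subseteq> S" and I0: "I \<noteq> {0}" using PI by auto
    have sI: "subspace I" using gi_sub[OF gi] .
    let ?S' = "S \<inter> perp I"
    have gS': "graded_ideal scale mul A0 A1 UNIV ?S'" by (rule int_gi[OF giS perp_gi[OF gi]])
    have sS': "subspace ?S'" using gi_sub[OF gS'] .
    have "\<exists>x0\<in>I. x0 \<noteq> 0"
    proof (rule ccontr)
      assume "\<not> (\<exists>x0\<in>I. x0 \<noteq> 0)"
      hence "I \<subseteq> {0}" by blast
      thus False using I0 subspace_0[OF sI] by blast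
    qed
    then obtain x0 where x0: "x0 \<in> I" "x0 \<noteq> 0" by blast
    have "x0 \<in> I \<inter> perp I \<Longrightarrow> False" using x0(2) perp_int[OF gi] by simp
    hence "x0 \<notin> ?S'" using x0(1) by blast
    have spS: "span S = S" using sS by simp
    have spS': "span ?S' = ?S'" using sS' by simp
    have "?S' \<subset> S" using \<open>x0 \<notin> ?S'\<close> x0(1) IS by blast
    hence "span ?S' \<subset> span S" unfolding spS spS' .
    hence dlt: "dim ?S' < dim S" by (rule dim_psubset)
    obtain m :: nat and J :: "nat \<Rightarrow> 'v set" where JJ: "(\<forall>k<m. graded_ideal scale mul A0 A1 UNIV (J k)) \<and>
     (\<forall>k<m. simple_sub scale mul A0 A1 (J k)) \<and>
     (\<forall>k<m. \<forall>x\<in>J k. (\<forall>y\<in>J k. B x y = 0) \<longrightarrow> x = 0) \<and>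
     (\<forall>j<m. \<forall>k<m. j \<noteq> k \<longrightarrow> (\<forall>x\<in>J j. \<forall>y\<in>J k. B x y = 0)) \<and>
     (\<forall>k<m. J k \<subseteq> ?S') \<and>
     (\<forall>v\<in>?S'. \<exists>f. (\<forall>k<m. f k \<in> J k) \<and> v = (\<Sum>k<m. f k)) \<and>
     (\<forall>f. (\<forall>k<m. f k \<in> J k) \<and> (\<Sum>k<m. f k) = 0 \<longrightarrow> (\<forall>k<m. f k = 0))"
      using less.hyps[OF dlt gS'] by (elim exE) (erule that)
    note J1 = JJ[THEN conjunct1]
    note J2 = JJ[THEN conjunct2, THEN conjunct1]
    note J3 = JJ[THEN conjunct2, THEN conjunct2, THEN conjunct1]
    note J4 = JJ[THEN conjunct2, THEN conjunct2, THEN conjunct2, THEN conjunct1]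
    note J5 = JJ[THEN conjunct2, THEN conjunct2, THEN conjunct2, THEN conjunct2, THEN conjunct1]
    note J6 = JJ[THEN conjunct2, THEN conjunct2, THEN conjunct2, THEN conjunct2, THEN conjunct2, THEN conjunct1]
    note J7 = JJ[THEN conjunct2, THEN conjunct2, THEN conjunct2, THEN conjunct2, THEN conjunct2, THEN conjunct2]
    define I' where "I' = (\<lambda>k. if k < m then J k else I)"
    have I'm: "I' m = I" and I'k: "\<And>k. k < m \<Longrightarrow> I' k = J k" by (auto simp: I'_def)
    have simpI: "simple_sub scale mul A0 A1 I"
      unfolding simple_sub_def
    proof (intro conjI allI impI)
      show "\<exists>x\<in>I. \<exists>y\<in>I. mul x y \<noteq> 0"
        using sqzero[OF gi] I0 by blast
      fix K assume gK: "graded_ideal scale mul A0 A1 I K"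
      have KI: "K \<subseteq> I" and sK: "subspace K" using gK unfolding graded_ideal_def by blast+
      have gKU: "graded_ideal scale mul A0 A1 UNIV K"
        unfolding graded_ideal_def
      proof (intro conjI ballI)
        show "K \<subseteq> UNIV" by simp
        show "subspace K" by (rule sK)
        fix x j assume j: "j \<in> K"
        obtain i p where ip: "i \<in> I" "p \<in> perp I" "x = i + p" using perp_complement[OF gi] by blast
        have jI: "j \<in> I" using j KI by blast
        have "mul p j = 0" "mul j p = 0" using perp_mul[OF gi jI ip(2)] by auto
        moreover have "mul i j \<in> K" "mul j i \<in> K" using gK ip(1) j unfolding graded_ideal_def by blast+
        ultimately show "mul x j \<in> K" "mul j x \<in> K" using ip(3) by (simp_all add: mul_addL mul_addR)
      next
        fix j assume "j \<in> K"
        thus "\<exists>a\<in>K \<inter> A0. \<exists>b\<in>K \<inter> A1. j = a + b" using gK unfolding graded_ideal_def by blast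
      qed
      show "K = {0} \<or> K = I"
      proof (cases "K = {0}")
        case False
        hence "dim I \<le> dim K" using Imin gKU KI IS by blast
        hence "K = I" using subspace_dim_equal[OF sK sI KI] by blast
        thus ?thesis by blast
      qed simp
    qed
    have ndI: "\<forall>x\<in>I. (\<forall>y\<in>I. B x y = 0) \<longrightarrow> x = 0"
    proof (intro ballI impI)
      fix x assume x: "x \<in> I" and h: "\<forall>y\<in>I. B x y = 0"
      hence "x \<in> perp I" using perp_sym[OF gi, of x] unfolding perp_def by blast
      thus "x = 0" using x perp_int[OF gi] by blast
    qed
    show ?thesis
    proof (rule exI[of _ "Suc m"], rule exI[of _ I'], intro conjI)
      show "\<forall>k<Suc m. graded_ideal scale mul A0 A1 UNIV (I' k)"
        using J1 gi by (auto simp: I'_def less_Suc_eq)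
      show "\<forall>k<Suc m. simple_sub scale mul A0 A1 (I' k)"
        using J2 simpI by (auto simp: I'_def less_Suc_eq)
      show "\<forall>k<Suc m. \<forall>x\<in>I' k. (\<forall>y\<in>I' k. B x y = 0) \<longrightarrow> x = 0"
        using J3 ndI by (auto simp: I'_def less_Suc_eq)
      show "\<forall>k<Suc m. I' k \<subseteq> S"
        using J5 IS by (auto simp: I'_def less_Suc_eq)
      show "\<forall>j<Suc m. \<forall>k<Suc m. j \<noteq> k \<longrightarrow> (\<forall>x\<in>I' j. \<forall>y\<in>I' k. B x y = 0)"
      proof (intro allI impI ballI)
        fix j k x y assume jk: "j < Suc m" "k < Suc m" "j \<noteq> k" and x: "x \<in> I' j" and y: "y \<in> I' k"
        show "B x y = 0"
        proof (cases "j < m")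
          case jm: True
          show ?thesis
          proof (cases "k < m")
            case True
            thus ?thesis using J4 jm jk x y by (auto simp: I'_def)
          next
            case False
            hence "k = m" using jk by simp
            hence yI: "y \<in> I" using y by (simp add: I'_def)
            have "x \<in> perp I" using x J5 jm by (auto simp: I'_def)
            thus ?thesis using perp_sym'[OF gi _ yI] by blast
          qed
        next
          case False
          hence "j = m" using jk by simp
          hence xI: "x \<in> I" and km: "k < m" using x jk by (auto simp: I'_def)
          have "y \<in> perp I" using y J5 km by (auto simp: I'_def)
          thus ?thesis using xI unfolding perp_def by blast
        qed
      qed
      show "\<forall>v\<in>S. \<exists>f. (\<forall>k<Suc m. f k \<in> I' k) \<and> v = (\<Sum>k<Suc m. f k)"
      proof
        fix v assume v: "v \<in> S"
        obtain i p where ip: "i \<in> I" "p \<in> perp I" "v = i + p" using perp_complement[OF gi] by blast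
        have "p = v - i" using ip by simp
        hence "p \<in> S" using v ip(1) IS sS subspace_diff by blast
        hence "p \<in> ?S'" using ip by blast
        then obtain f where f: "\<forall>k<m. f k \<in> J k" "p = (\<Sum>k<m. f k)" using J6 by blast
        let ?f = "f(m := i)"
        have "(\<Sum>k<Suc m. ?f k) = (\<Sum>k<m. f k) + i" by simp
        hence "v = (\<Sum>k<Suc m. ?f k)" using f ip by (simp add: add.commute)
        moreover have "\<forall>k<Suc m. ?f k \<in> I' k" using f ip by (auto simp: I'_def less_Suc_eq)
        ultimately show "\<exists>f. (\<forall>k<Suc m. f k \<in> I' k) \<and> v = (\<Sum>k<Suc m. f k)" by blast
      qed
      show "\<forall>f. (\<forall>k<Suc m. f k \<in> I' k) \<and> (\<Sum>k<Suc m. f k) = 0 \<longrightarrow> (\<forall>k<Suc m. f k = 0)"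
      proof (intro allI impI)
        fix f k assume h: "(\<forall>k<Suc m. f k \<in> I' k) \<and> (\<Sum>k<Suc m. f k) = 0" and k: "k < Suc m"
        have fJ: "\<forall>k<m. f k \<in> J k"
        proof (intro allI impI)
          fix k assume "k < m"
          hence "k < Suc m" "I' k = J k" by (auto simp: I'_def)
          moreover have "f k \<in> I' k" using h \<open>k < Suc m\<close> by blast
          ultimately show "f k \<in> J k" by simp
        qed
        have "f m \<in> I' m" using h by blast
        hence fm: "f m \<in> I" using I'm by simp
        have "\<And>k. k \<in> {..<m} \<Longrightarrow> f k \<in> ?S'" using fJ J5 by blast
        hence sumS: "(\<Sum>k<m. f k) \<in> ?S'" by (rule subspace_sum[OF sS'])
        have "(\<Sum>k<m. f k) + f m = 0" using h by simp
        hence "f m = - (\<Sum>k<m. f k)" by (simp only: add_eq_0_iff)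
        hence "f m \<in> ?S'" using subspace_neg[OF sS' sumS] by simp
        hence "f m \<in> I \<inter> perp I" using fm by blast
        hence fm0: "f m = 0" using perp_int[OF gi] by blast
        hence "(\<Sum>k<m. f k) = 0" using h by simp
        hence "\<forall>k<m. f k = 0" using J7[rule_format, OF conjI[OF fJ]] by blast
        thus "f k = 0"
        proof (cases "k < m")
          case False
          hence "k = m" using k by simp
          thus ?thesis using fm0 by simp
        qed simp
      qed
    qed
  qed
qed

lemma gi_UNIV: "graded_ideal scale mul A0 A1 UNIV UNIV"
  unfolding graded_ideal_def using decomp by auto

end

theorem mainTheorem14:
  fixes scale :: "'k::{alg_closed_field, field_char_0} \<Rightarrow> 'v::ab_group_add \<Rightarrow> 'v"
    and mul :: "'v \<Rightarrow> 'v \<Rightarrow> 'v"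
    and A0 A1 :: "'v set"
    and B :: "'v \<Rightarrow> 'v \<Rightarrow> 'k"
  assumes "superalgebra scale mul A0 A1"
    and "assoc_mul mul"
    and "finite_dim scale"
    and "even_symmetric scale mul A0 A1 B"
    and "semisimple_even_bimodule scale mul A0"
    and "Ann mul = {0}"
  shows "\<exists>(m::nat) (I :: nat \<Rightarrow> 'v set).
     (\<forall>k<m. graded_ideal scale mul A0 A1 UNIV (I k)) \<and>
     (\<forall>k<m. simple_sub scale mul A0 A1 (I k)) \<and>
     (\<forall>k<m. \<forall>x\<in>I k. (\<forall>y\<in>I k. B x y = 0) \<longrightarrow> x = 0) \<and>
     (\<forall>j<m. \<forall>k<m. j \<noteq> k \<longrightarrow> (\<forall>x\<in>I j. \<forall>y\<in>I k. B x y = 0)) \<and>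
     (\<forall>v. \<exists>f. (\<forall>k<m. f k \<in> I k) \<and> v = (\<Sum>k<m. f k)) \<and>
     (\<forall>f. (\<forall>k<m. f k \<in> I k) \<and> (\<Sum>k<m. f k) = 0 \<longrightarrow> (\<forall>k<m. f k = 0))"
proof -
  obtain Bas where Bas: "finite_dimensional_vector_space scale Bas"
    using assms(3) unfolding finite_dim_def by blast
  interpret sa scale mul A0 A1 B Bas
    by (rule sa.intro[OF assms(1,2) Bas assms(4,5,6)])
  have ex: "\<exists>(m::nat) (I :: nat \<Rightarrow> 'v set).
     (\<forall>k<m. graded_ideal scale mul A0 A1 UNIV (I k)) \<and>
     (\<forall>k<m. simple_sub scale mul A0 A1 (I k)) \<and>
     (\<forall>k<m. \<forall>x\<in>I k. (\<forall>y\<in>I k. B x y = 0) \<longrightarrow> x = 0) \<and>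
     (\<forall>j<m. \<forall>k<m. j \<noteq> k \<longrightarrow> (\<forall>x\<in>I j. \<forall>y\<in>I k. B x y = 0)) \<and>
     (\<forall>k<m. I k \<subseteq> UNIV) \<and>
     (\<forall>v\<in>UNIV. \<exists>f. (\<forall>k<m. f k \<in> I k) \<and> v = (\<Sum>k<m. f k)) \<and>
     (\<forall>f. (\<forall>k<m. f k \<in> I k) \<and> (\<Sum>k<m. f k) = 0 \<longrightarrow> (\<forall>k<m. f k = 0))"
    by (rule decomp_S[OF gi_UNIV])
  show ?thesis
    using ex
    apply (elim exE conjE)
    subgoal for m I
      apply (rule exI[of _ m])
      apply (rule exI[of _ I])
      apply (intro conjI)
           apply assumption
          apply assumption
         apply assumption
        apply assumption
       apply (unfold ball_UNIV)
       apply assumption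
      apply assumption
      done
    done
qed

end
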